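(* Let $\mathcal{A}=\{H_1,\dots,H_n\}$ be an essential arrangement in $K^l$. Then $\mathcal{I}(\bar{\mathcal{A}})$ determines $L(\mathcal{A})$, and vice versa.
   Context: Let $K$ be a field and let $\mathcal{A}=\{H_1,\dots,H_n\}$ be an affine arrangement of $n$ distinct, linearly ordered hyperplanes in $K^l$. The lattice of intersections is $L(\mathcal{A})=\{\bigcap_{H\in\mathcal{B}}H \mid \mathcal{B}\subseteq\mathcal{A}\}$ (the empty intersection being $K^l$), partially ordered by reverse inclusion and ranked by codimension. $\mathcal{A}$ is called essential if $L(\mathcal{A})$ contains an element of rank $l$, i.e. some intersection of hyperplanes of $\mathcal{A}$ is a point. The coning $c\mathcal{A}=\{\tilde H_1,\dots,\tilde H_{n+1}\}$ is a central arrangement in $K^{l+1}$, where $\tilde H_{n+1}$ corresponds to the hyperplane at infinity $H_\infty$; $\bar{\mathcal{A}}=\{\bar H_1,\dots,\bar H_{n+1}\}$ denotes the projectivization of $c\mathcal{A}$ in $K\mathbb{P}^l$ (so $\bar H_{n+1}=\bar H_\infty$). With $[n+1]=\{1,\dots,n+1\}$ and $[n+1]^{l+1}_<=\{(i_1,\dots,i_{l+1})\in[n+1]^{l+1} \mid i_1<\cdots<i_{l+1}\}$, define $\mathcal{I}(\bar{\mathcal{A}})=\{(i_1,\dots,i_{l+1})\in[n+1]^{l+1}_< \mid \bar H_{i_1}\cap\cdots\cap\bar H_{i_{l+1}}\neq\emptyset\}$. *)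

theory Defs
  imports "HOL-Analysis.Finite_Cartesian_Product"
begin

text \<open>Affine hyperplane {x in K^l. a . x = b} in K^l = 'a^'n (l = CARD('n)).\<close>
definition dotp :: "'a::field ^ 'n \<Rightarrow> 'a ^ 'n \<Rightarrow> 'a" where
  "dotp a x = (\<Sum>i\<in>UNIV. a $ i * x $ i)"

definition hyp :: "'a::field ^ 'n \<Rightarrow> 'a \<Rightarrow> ('a ^ 'n) set" where
  "hyp a c = {x. dotp a x = c}"

definition arrangement :: "nat \<Rightarrow> (nat \<Rightarrow> 'a::field ^ 'n) \<Rightarrow> (nat \<Rightarrow> 'a) \<Rightarrow> bool" where
  "arrangement n a c \<longleftrightarrow>
     (\<forall>i\<in>{1..n}. a i \<noteq> 0) \<and>
     (\<forall>i\<in>{1..n}. \<forall>j\<in>{1..n}. i \<noteq> j \<longrightarrow> hyp (a i) (c i) \<noteq> hyp (a j) (c j))"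

text \<open>Intersection of the hyperplanes indexed by B (empty intersection = K^l).\<close>
definition isect :: "(nat \<Rightarrow> 'a::field ^ 'n) \<Rightarrow> (nat \<Rightarrow> 'a) \<Rightarrow> nat set \<Rightarrow> ('a ^ 'n) set" where
  "isect a c B = (\<Inter>i\<in>B. hyp (a i) (c i))"

definition LA :: "nat \<Rightarrow> (nat \<Rightarrow> 'a::field ^ 'n) \<Rightarrow> (nat \<Rightarrow> 'a) \<Rightarrow> ('a ^ 'n) set set" where
  "LA n a c = isect a c ` Pow {1..n}"

text \<open>Essential: some intersection is a point (an element of rank l).\<close>
definition essential :: "nat \<Rightarrow> (nat \<Rightarrow> 'a::field ^ 'n) \<Rightarrow> (nat \<Rightarrow> 'a) \<Rightarrow> bool" where
  "essential n a c \<longleftrightarrow> (\<exists>X\<in>LA n a c. \<exists>p. X = {p})"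

text \<open>Coning: in K^{l+1} = K^l x K (homogenizing coordinate t), cH_i = {(x,t). a_i . x = c_i t}
  for i \<le> n, and cH_{n+1} = {(x,t). t = 0} (hyperplane at infinity).\<close>
definition coneH :: "nat \<Rightarrow> (nat \<Rightarrow> 'a::field ^ 'n) \<Rightarrow> (nat \<Rightarrow> 'a) \<Rightarrow> nat \<Rightarrow> (('a ^ 'n) \<times> 'a) set" where
  "coneH n a c i = (if i = n + 1 then {(x, t). t = 0} else {(x, t). dotp (a i) x = c i * t})"

text \<open>Projective intersection of the bar H_i, i in S, is nonempty iff the cone hyperplanes
  share a nonzero vector.\<close>
definition proj_meet :: "nat \<Rightarrow> (nat \<Rightarrow> 'a::field ^ 'n) \<Rightarrow> (nat \<Rightarrow> 'a) \<Rightarrow> nat set \<Rightarrow> bool" where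
  "proj_meet n a c S \<longleftrightarrow> (\<exists>x t. (x, t) \<noteq> (0, 0) \<and> (\<forall>i\<in>S. (x, t) \<in> coneH n a c i))"

definition Iset :: "nat \<Rightarrow> (nat \<Rightarrow> 'a::field ^ 'n) \<Rightarrow> (nat \<Rightarrow> 'a) \<Rightarrow> nat list set" where
  "Iset n a c = {xs. length xs = CARD('n) + 1 \<and> sorted_wrt (<) xs \<and> set xs \<subseteq> {1..n+1}
                      \<and> proj_meet n a c (set xs)}"

text \<open>Two arrangements (same number of hyperplanes, same labelling) have the same labelled
  intersection lattice: the map B \<mapsto> \<Inter>_{i\<in>B} H_i induces the same order (reverse inclusion)
  and the same empty intersections.\<close>
definition same_lattice ::
  "nat \<Rightarrow> (nat \<Rightarrow> 'a::field ^ 'n) \<Rightarrow> (nat \<Rightarrow> 'a) \<Rightarrow> (nat \<Rightarrow> 'a ^ 'n) \<Rightarrow> (nat \<Rightarrow> 'a) \<Rightarrow> bool" where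
  "same_lattice n a c a' c' \<longleftrightarrow>
     (\<forall>B\<subseteq>{1..n}. \<forall>C\<subseteq>{1..n}.
        (isect a c B \<subseteq> isect a c C \<longleftrightarrow> isect a' c' B \<subseteq> isect a' c' C) \<and>
        (isect a c B = {} \<longleftrightarrow> isect a' c' B = {}))"

end

theory Submission
  imports Defs "HOL-Analysis.Cartesian_Space"
begin

lemma dotp_add1: "dotp (u + v) y = dotp u y + dotp v y"
  by (simp add: dotp_def sum.distrib algebra_simps)
lemma dotp_scale1: "dotp (r *s u) y = r * dotp u y"
  by (simp add: dotp_def sum_distrib_left algebra_simps)
lemma dotp_zero1[simp]: "dotp 0 y = 0"
  by (simp add: dotp_def)

definition perp :: "('a::field ^ 'm) set \<Rightarrow> 'a ^ 'm \<Rightarrow> bool" where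
  "perp W y \<longleftrightarrow> (\<forall>w\<in>W. dotp w y = 0)"

lemma perp_span: assumes "perp W y" shows "perp (vec.span W) y"
proof -
  have "vec.span W \<subseteq> {w. dotp w y = 0}"
  proof (rule vec.span_minimal)
    show "W \<subseteq> {w. dotp w y = 0}" using assms by (auto simp: perp_def)
    show "vec.subspace {w. dotp w y = 0}"
      by (auto simp: vec.subspace_def dotp_add1 dotp_scale1)
  qed
  then show ?thesis by (auto simp: perp_def)
qed

lemma functional_exists:
  fixes v :: "'a::field ^ 'm"
  assumes "v \<notin> vec.span W"
  shows "\<exists>y. perp (vec.span W) y \<and> dotp v y \<noteq> 0"
proof -
  obtain B0 where B0: "B0 \<subseteq> vec.span W" "vec.independent B0" "vec.span W \<subseteq> vec.span B0"
    using vec.maximal_independent_subset[of "vec.span W"] by blast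
  have sB0: "vec.span B0 = vec.span W"
    using B0 by (simp add: subset_antisym vec.span_minimal vec.subspace_span)
  have ind: "vec.independent (insert v B0)"
    using B0(2) assms sB0 by (simp add: vec.independent_insertI)
  obtain K where K: "insert v B0 \<subseteq> K" "vec.independent K" "UNIV \<subseteq> vec.span K"
    by (rule vec.maximal_independent_subset_extend[OF subset_UNIV ind])
  define f where "f x = vec.representation K x v" for x
  define y where "y = (\<chi> i. f (axis i 1))"
  have fy: "dotp w y = f w" for w
  proof -
    have "f w = f (\<Sum>i\<in>UNIV. (w$i) *s axis i 1)" by (simp add: basis_expansion)
    also have "\<dots> = (\<Sum>i\<in>UNIV. w$i * f (axis i 1))"
      unfolding f_def
      apply (subst vec.representation_sum[OF K(2)])
      using K(3) apply blast
      apply (subst vec.representation_scale[OF K(2)])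
      using K(3) apply blast
      by simp
    finally show ?thesis by (simp add: dotp_def y_def)
  qed
  have "perp B0 y"
  proof (unfold perp_def, intro ballI)
    fix b assume b: "b \<in> B0"
    then have "b \<noteq> v" using ind using assms sB0 vec.span_base by blast
    then show "dotp b y = 0" using K b
      by (simp add: fy f_def vec.representation_basis[OF K(2)] subset_eq)
  qed
  then have "perp (vec.span W) y" using perp_span[of B0 y] sB0 by simp
  moreover have "dotp v y = 1" using K by (simp add: fy f_def vec.representation_basis[OF K(2)])
  ultimately show ?thesis by auto
qed

definition indp :: "(nat \<Rightarrow> 'a::field ^ 'm) \<Rightarrow> nat set \<Rightarrow> bool" where
  "indp w I \<longleftrightarrow> (\<forall>i\<in>I. w i \<notin> vec.span (w ` (I - {i})))"

lemma indp_iff: "indp w I \<longleftrightarrow> inj_on w I \<and> vec.independent (w ` I)"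
proof
  assume H: "indp w I"
  have inj: "inj_on w I"
  proof (rule inj_onI, rule ccontr)
    fix i j assume "i \<in> I" "j \<in> I" "w i = w j" "i \<noteq> j"
    then have "w i \<in> w ` (I - {i})" by auto
    then have "w i \<in> vec.span (w ` (I - {i}))" by (rule vec.span_base)
    with H \<open>i \<in> I\<close> show False by (auto simp: indp_def)
  qed
  moreover have "vec.independent (w ` I)"
    unfolding vec.dependent_def
  proof (clarsimp)
    fix i assume "i \<in> I" "w i \<in> vec.span (w ` I - {w i})"
    moreover have "w ` I - {w i} = w ` (I - {i})"
      using inj \<open>i \<in> I\<close> by (auto simp: inj_on_def)
    ultimately show False using H by (auto simp: indp_def)
  qed
  ultimately show "inj_on w I \<and> vec.independent (w ` I)" by simp
next
  assume H: "inj_on w I \<and> vec.independent (w ` I)"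
  show "indp w I" unfolding indp_def
  proof (intro ballI notI)
    fix i assume i: "i \<in> I" "w i \<in> vec.span (w ` (I - {i}))"
    have "w ` I - {w i} = w ` (I - {i})"
      using H i(1) by (auto simp: inj_on_def)
    then show False using H i unfolding vec.dependent_def by auto
  qed
qed

lemma indp_mono: "indp w I \<Longrightarrow> J \<subseteq> I \<Longrightarrow> indp w J"
  unfolding indp_iff using inj_on_subset vec.independent_mono image_mono by metis

lemma indp_insert:
  assumes "indp w I" "b \<notin> I"
  shows "indp w (insert b I) \<longleftrightarrow> w b \<notin> vec.span (w ` I)"
proof -
  have "w b \<notin> vec.span (w ` I) \<Longrightarrow> w b \<notin> w ` I" using vec.span_base by blast
  then show ?thesis using assms
    by (auto simp: indp_iff vec.independent_insert vec.span_base)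
qed

lemma card_span_indp:
  fixes w :: "nat \<Rightarrow> 'a::field ^ 'm"
  assumes "finite T" "card T = CARD('m)"
  shows "vec.span (w ` T) = UNIV \<longleftrightarrow> indp w T"
proof
  have dimU: "vec.dim (UNIV::('a^'m) set) = CARD('m)" by (rule vec_dim_card)
  assume sp: "vec.span (w ` T) = UNIV"
  have c1: "card (w ` T) \<le> CARD('m)" using assms card_image_le by metis
  have c2: "CARD('m) \<le> card (w ` T)"
    using vec.dim_le_card[of UNIV "w ` T"] sp assms dimU by auto
  have "inj_on w T" using c1 c2 assms eq_card_imp_inj_on by (metis le_antisym)
  moreover have "vec.independent (w ` T)"
    using vec.card_le_dim_spanning[of "w ` T" UNIV] sp assms c1 dimU by auto
  ultimately show "indp w T" by (simp add: indp_iff)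
next
  have dimU: "vec.dim (UNIV::('a^'m) set) = CARD('m)" by (rule vec_dim_card)
  assume "indp w T"
  then have "inj_on w T" "vec.independent (w ` T)" by (auto simp: indp_iff)
  then have "UNIV \<subseteq> vec.span (w ` T)"
    using vec.card_eq_dim[of "w ` T" UNIV] assms dimU card_image by (metis finite_imageI subset_UNIV)
  then show "vec.span (w ` T) = UNIV" by auto
qed

lemma choose_indices:
  assumes "J \<subseteq> B" "inj_on w J" "w ` J \<subseteq> K" "K \<subseteq> w ` B"
  shows "\<exists>I. J \<subseteq> I \<and> I \<subseteq> B \<and> inj_on w I \<and> w ` I = K"
proof -
  define g where "g k = (if k \<in> w ` J then the_inv_into J w k else (SOME i. i \<in> B \<and> w i = k))" for k
  have g: "g k \<in> B \<and> w (g k) = k" if "k \<in> K" for k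
  proof (cases "k \<in> w ` J")
    case True
    then show ?thesis using assms f_the_inv_into_f[OF assms(2)] the_inv_into_into[OF assms(2)]
      by (auto simp: g_def)
  next
    case False
    have "\<exists>i. i \<in> B \<and> w i = k" using that assms(4) by auto
    then have "(SOME i. i \<in> B \<and> w i = k) \<in> B \<and> w (SOME i. i \<in> B \<and> w i = k) = k"
      by (rule someI_ex)
    then show ?thesis using False by (simp add: g_def)
  qed
  have gJ: "g (w j) = j" if "j \<in> J" for j
    using that assms(2) by (auto simp: g_def the_inv_into_f_f)
  show ?thesis
  proof (intro exI[of _ "g ` K"] conjI)
    show "J \<subseteq> g ` K"
    proof
      fix j assume "j \<in> J"
      then have "j = g (w j)" "w j \<in> K" using gJ assms(3) by auto
      then show "j \<in> g ` K" by blast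
    qed
    show "g ` K \<subseteq> B" using g by auto
    show "inj_on w (g ` K)" using g by (auto simp: inj_on_def)
    show "w ` g ` K = K" using g by (force simp: image_image)
  qed
qed

lemma span_subset_span: "A \<subseteq> vec.span B \<Longrightarrow> vec.span A \<subseteq> vec.span B"
  by (simp add: vec.span_minimal vec.subspace_span)

lemma dimU: "vec.dim (UNIV::('a::field^'m) set) = CARD('m)" by (rule vec_dim_card)

lemma indp_iff_basis:
  fixes w :: "nat \<Rightarrow> 'a::field ^ 'm"
  assumes E: "finite E" "vec.span (w ` E) = UNIV" and J: "J \<subseteq> E"
  shows "indp w J \<longleftrightarrow> (\<exists>S. J \<subseteq> S \<and> S \<subseteq> E \<and> card S = CARD('m) \<and> vec.span (w ` S) = UNIV)"
proof
  assume "indp w J"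
  then have ij: "inj_on w J" "vec.independent (w ` J)" by (auto simp: indp_iff)
  obtain K where K: "w ` J \<subseteq> K" "K \<subseteq> w ` E" "vec.independent K" "w ` E \<subseteq> vec.span K"
    by (rule vec.maximal_independent_subset_extend[of "w ` J" "w ` E"]) (use ij J in auto)
  obtain I where I: "J \<subseteq> I" "I \<subseteq> E" "inj_on w I" "w ` I = K"
    using choose_indices[OF J ij(1) K(1) K(2)] by blast
  have spK: "vec.span K = UNIV" using K(4) E(2) span_subset_span by blast
  have "card K = CARD('m)"
    using vec.basis_card_eq_dim[of K UNIV] K(3) spK dimU by auto
  then have "card I = CARD('m)" using I card_image by metis
  then show "\<exists>S. J \<subseteq> S \<and> S \<subseteq> E \<and> card S = CARD('m) \<and> vec.span (w ` S) = UNIV"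
    using I spK by blast
next
  assume "\<exists>S. J \<subseteq> S \<and> S \<subseteq> E \<and> card S = CARD('m) \<and> vec.span (w ` S) = UNIV"
  then obtain S where S: "J \<subseteq> S" "S \<subseteq> E" "card S = CARD('m)" "vec.span (w ` S) = UNIV" by blast
  then have "indp w S" using card_span_indp[of S w] E(1) finite_subset by blast
  then show "indp w J" using S(1) indp_mono by blast
qed

lemma span_maximal:
  assumes "I \<subseteq> B" "indp w I" "\<forall>b\<in>B - I. \<not> indp w (insert b I)"
  shows "vec.span (w ` I) = vec.span (w ` B)"
proof
  show "vec.span (w ` I) \<subseteq> vec.span (w ` B)" using assms(1) by (intro vec.span_mono) auto
  have "w ` B \<subseteq> vec.span (w ` I)"
  proof
    fix x assume "x \<in> w ` B"
    then obtain b where b: "b \<in> B" "x = w b" by auto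
    show "x \<in> vec.span (w ` I)"
    proof (cases "b \<in> I")
      case True then show ?thesis using b by (auto intro: vec.span_base)
    next
      case False then show ?thesis using b assms indp_insert[OF assms(2) False] by auto
    qed
  qed
  then show "vec.span (w ` B) \<subseteq> vec.span (w ` I)" by (rule span_subset_span)
qed

lemma span_iff_indp:
  "w j \<in> vec.span (w ` B) \<longleftrightarrow> (\<forall>I. I \<subseteq> B \<and> indp w I \<and> (\<forall>b\<in>B - I. \<not> indp w (insert b I))
      \<longrightarrow> j \<in> I \<or> \<not> indp w (insert j I))"
proof
  assume j: "w j \<in> vec.span (w ` B)"
  show "\<forall>I. I \<subseteq> B \<and> indp w I \<and> (\<forall>b\<in>B - I. \<not> indp w (insert b I)) \<longrightarrow> j \<in> I \<or> \<not> indp w (insert j I)"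
  proof (intro allI impI)
    fix I assume H: "I \<subseteq> B \<and> indp w I \<and> (\<forall>b\<in>B - I. \<not> indp w (insert b I))"
    then have "vec.span (w ` I) = vec.span (w ` B)" using span_maximal by blast
    then show "j \<in> I \<or> \<not> indp w (insert j I)" using j H indp_insert by metis
  qed
next
  assume H: "\<forall>I. I \<subseteq> B \<and> indp w I \<and> (\<forall>b\<in>B - I. \<not> indp w (insert b I)) \<longrightarrow> j \<in> I \<or> \<not> indp w (insert j I)"
  obtain K where K: "K \<subseteq> w ` B" "vec.independent K" "w ` B \<subseteq> vec.span K"
    by (rule vec.maximal_independent_subset[of "w ` B"])
  obtain I where I: "I \<subseteq> B" "inj_on w I" "w ` I = K"
    using choose_indices[of "{}" B w K] K(1) by auto
  have iI: "indp w I" using I K by (simp add: indp_iff)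
  have mx: "\<forall>b\<in>B - I. \<not> indp w (insert b I)"
    using indp_insert[OF iI] K(3) I(3) by auto
  have sp: "vec.span (w ` I) = vec.span (w ` B)" using span_maximal[OF I(1) iI mx] .
  from H I(1) iI mx have "j \<in> I \<or> \<not> indp w (insert j I)" by blast
  then show "w j \<in> vec.span (w ` B)"
  proof
    assume "j \<in> I" then show ?thesis using I(1) by (auto intro: vec.span_base)
  next
    assume "\<not> indp w (insert j I)"
    then have "j \<in> I \<or> w j \<in> vec.span (w ` I)" using indp_insert[OF iI] by blast
    then show ?thesis using sp I(1) by (auto intro: vec.span_base)
  qed
qed

lemma span_char:
  fixes w :: "nat \<Rightarrow> 'a::field ^ 'm"
  assumes T: "finite T" "card T = CARD('m)" and p: "w p \<noteq> 0"
  shows "vec.span (w ` T) = UNIV \<longleftrightarrow>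
    (\<exists>I. I \<subseteq> T - {p} \<and> card I = CARD('m) - 1 \<and> indp w I \<and> w p \<notin> vec.span (w ` I)) \<and>
    (p \<in> T \<or> w p \<in> vec.span (w ` (T - {p})))"
proof
  assume sp: "vec.span (w ` T) = UNIV"
  have ip: "indp w {p}" using p by (simp add: indp_def)
  then have ip2: "inj_on w {p}" "vec.independent (w ` {p})" by (auto simp: indp_iff)
  obtain K where K: "w ` {p} \<subseteq> K" "K \<subseteq> w ` insert p T" "vec.independent K" "w ` insert p T \<subseteq> vec.span K"
    by (rule vec.maximal_independent_subset_extend[of "w ` {p}" "w ` insert p T"]) (use ip2 in auto)
  obtain I' where I': "{p} \<subseteq> I'" "I' \<subseteq> insert p T" "inj_on w I'" "w ` I' = K"
    using choose_indices[of "{p}" "insert p T" w K] ip2 K by auto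
  have spK: "vec.span K = UNIV"
  proof -
    have "w ` T \<subseteq> vec.span K" using K(4) by auto
    then show ?thesis using sp span_subset_span by blast
  qed
  have "card K = CARD('m)"
    using vec.basis_card_eq_dim[of K UNIV] K(3) spK dimU by auto
  then have cI': "card I' = CARD('m)" using I' card_image by metis
  have fI': "finite I'" using I'(2) T(1) finite_subset by blast
  have iI': "indp w I'" using I' K by (simp add: indp_iff)
  define I where "I = I' - {p}"
  have "I \<subseteq> T - {p}" using I' by (auto simp: I_def)
  moreover have "card I = CARD('m) - 1" using cI' I'(1) fI' by (simp add: I_def)
  moreover have "indp w I" using iI' indp_mono I_def by blast
  moreover have "w p \<notin> vec.span (w ` I)" using iI' I'(1) by (auto simp: indp_def I_def)
  moreover have "p \<in> T \<or> w p \<in> vec.span (w ` (T - {p}))"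
    using sp by (cases "p \<in> T") auto
  ultimately show "(\<exists>I. I \<subseteq> T - {p} \<and> card I = CARD('m) - 1 \<and> indp w I \<and> w p \<notin> vec.span (w ` I)) \<and>
    (p \<in> T \<or> w p \<in> vec.span (w ` (T - {p})))" by blast
next
  assume "(\<exists>I. I \<subseteq> T - {p} \<and> card I = CARD('m) - 1 \<and> indp w I \<and> w p \<notin> vec.span (w ` I)) \<and>
    (p \<in> T \<or> w p \<in> vec.span (w ` (T - {p})))"
  then obtain I where I: "I \<subseteq> T - {p}" "card I = CARD('m) - 1" "indp w I" "w p \<notin> vec.span (w ` I)"
    and pT: "p \<in> T \<or> w p \<in> vec.span (w ` (T - {p}))" by blast
  have pI: "p \<notin> I" using I(1) by auto
  have fI: "finite I" using I(1) T(1) finite_subset by blast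
  have ins: "indp w (insert p I)" using indp_insert[OF I(3) pI] I(4) by simp
  have "card (insert p I) = CARD('m)" using pI fI I(2) finite_UNIV_card_ge_0[where 'a='m] by simp
  then have spi: "vec.span (w ` insert p I) = UNIV" using card_span_indp[of "insert p I" w] fI ins by simp
  have "w p \<in> vec.span (w ` T)"
  proof (cases "p \<in> T")
    case True then show ?thesis by (auto intro: vec.span_base)
  next
    case False then show ?thesis using pT by simp
  qed
  moreover have "w ` I \<subseteq> vec.span (w ` T)" using I(1) by (auto intro: vec.span_base)
  ultimately have "w ` insert p I \<subseteq> vec.span (w ` T)" by auto
  then show "vec.span (w ` T) = UNIV" using spi span_subset_span by blast
qed

definition cw :: "nat \<Rightarrow> (nat \<Rightarrow> 'a::field ^ 'n) \<Rightarrow> (nat \<Rightarrow> 'a) \<Rightarrow> nat \<Rightarrow> 'a ^ ('n option)" where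
  "cw n a c i = (\<chi> k. if i = n + 1 then (case k of None \<Rightarrow> 1 | Some _ \<Rightarrow> 0)
                        else (case k of None \<Rightarrow> - c i | Some j \<Rightarrow> a i $ j))"

definition xpart :: "'a ^ ('n option) \<Rightarrow> 'a ^ 'n" where
  "xpart z = (\<chi> j. z $ Some j)"

definition emb :: "'a ^ 'n \<Rightarrow> 'a \<Rightarrow> 'a ^ ('n option)" where
  "emb x t = (\<chi> k. case k of None \<Rightarrow> t | Some j \<Rightarrow> x $ j)"

lemma sum_option: "(\<Sum>k\<in>(UNIV::'n::finite option set). f k) = f None + (\<Sum>j\<in>UNIV. f (Some j))"
proof -
  have "(UNIV::'n option set) = insert None (range Some)" by (rule UNIV_option_conv)
  then have "(\<Sum>k\<in>(UNIV::'n option set). f k) = (\<Sum>k\<in>insert None (range Some). f k)" by simp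
  also have "\<dots> = f None + (\<Sum>k\<in>range Some. f k)" by (subst sum.insert) auto
  also have "(\<Sum>k\<in>range Some. f k) = (\<Sum>j\<in>UNIV. f (Some j))"
    by (subst sum.reindex) (auto simp: inj_on_def)
  finally show ?thesis .
qed

lemma card_option_UNIV: "CARD('n::finite option) = CARD('n) + 1"
proof -
  have "(UNIV::'n option set) = insert None (range Some)" by (rule UNIV_option_conv)
  then have "CARD('n option) = card (insert None (range (Some::'n \<Rightarrow> _)))" by simp
  also have "\<dots> = Suc (card (range (Some::'n \<Rightarrow> _)))" by (subst card_insert_disjoint) auto
  also have "card (range (Some::'n \<Rightarrow> _)) = CARD('n)" by (rule card_image) (auto simp: inj_on_def)
  finally show ?thesis by simp
qed

lemma dot_cw: "i \<noteq> Suc n \<Longrightarrow> dotp (cw n a c i) z = dotp (a i) (xpart z) - c i * z $ None"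
  by (simp add: dotp_def sum_option cw_def xpart_def)

lemma dot_cw_inf: "dotp (cw n a c (Suc n)) z = z $ None"
  by (simp add: dotp_def sum_option cw_def)

lemma emb_None[simp]: "emb x t $ None = t" by (simp add: emb_def)
lemma xpart_emb[simp]: "xpart (emb x t) = x" by (simp add: emb_def xpart_def)
lemma emb_xpart: "emb (xpart z) (z $ None) = z"
  by (simp add: emb_def xpart_def vec_eq_iff split: option.splits)
lemma emb_eq0: "emb x t = 0 \<longleftrightarrow> x = 0 \<and> t = 0"
  by (auto simp: emb_def vec_eq_iff split: option.splits)

lemma cw_inf_ne0: "cw n a c (n + 1) \<noteq> 0"
proof
  assume "cw n a c (n + 1) = 0"
  then have "cw n a c (n + 1) $ None = 0" by simp
  then show False by (simp add: cw_def)
qed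

lemma dotp_add2: "dotp u (x + y) = dotp u x + dotp u y"
  by (simp add: dotp_def sum.distrib algebra_simps)
lemma dotp_scale2: "dotp u (r *s x) = r * dotp u x"
  by (simp add: dotp_def sum_distrib_left algebra_simps)
lemma dotp_axis: "dotp (axis k 1) y = y $ k"
proof -
  have "(\<Sum>i\<in>UNIV. axis k 1 $ i * y $ i) = (\<Sum>i\<in>UNIV. if i = k then y $ i else 0)"
    by (rule sum.cong) (auto simp: axis_def)
  then show ?thesis by (simp add: dotp_def)
qed

lemma perp_span_UNIV:
  assumes "perp (vec.span W) y" "vec.span W = UNIV"
  shows "y = 0"
proof -
  have "y $ k = 0" for k using assms dotp_axis[of k y] by (auto simp: perp_def)
  then show ?thesis by (simp add: vec_eq_iff)
qed

lemma perp_base: "perp (vec.span W) y \<Longrightarrow> perp W y"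
  using vec.span_superset unfolding perp_def by blast

lemma perp_scale: "perp W y \<Longrightarrow> perp W (r *s y)"
  by (simp add: perp_def dotp_scale2)
lemma perp_add: "perp W y \<Longrightarrow> perp W z \<Longrightarrow> perp W (y + z)"
  by (simp add: perp_def dotp_add2)

lemma coneH_iff: "(x, t) \<in> coneH n a c i \<longleftrightarrow> dotp (cw n a c i) (emb x t) = 0"
  by (cases "i = n + 1") (auto simp: coneH_def dot_cw dot_cw_inf)

lemma proj_meet_iff: "proj_meet n a c S \<longleftrightarrow> vec.span (cw n a c ` S) \<noteq> UNIV"
proof
  assume "proj_meet n a c S"
  then obtain x t where xt: "(x, t) \<noteq> (0, 0)" "\<forall>i\<in>S. (x, t) \<in> coneH n a c i"
    by (auto simp: proj_meet_def)
  have "perp (cw n a c ` S) (emb x t)" using xt(2) by (auto simp: perp_def coneH_iff)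
  then have "perp (vec.span (cw n a c ` S)) (emb x t)" by (rule perp_span)
  moreover have "emb x t \<noteq> 0" using xt(1) by (simp add: emb_eq0)
  ultimately show "vec.span (cw n a c ` S) \<noteq> UNIV" using perp_span_UNIV by blast
next
  assume "vec.span (cw n a c ` S) \<noteq> UNIV"
  then obtain v where "v \<notin> vec.span (cw n a c ` S)" by auto
  then obtain y where y: "perp (vec.span (cw n a c ` S)) y" "dotp v y \<noteq> 0"
    using functional_exists by blast
  have "y \<noteq> 0" using y(2) by (auto simp: dotp_def)
  then have "(xpart y, y $ None) \<noteq> (0, 0)" using emb_xpart[of y] by (auto simp: emb_eq0)
  moreover have "\<forall>i\<in>S. (xpart y, y $ None) \<in> coneH n a c i"
    using y(1) by (auto simp: coneH_iff emb_xpart perp_def intro: vec.span_base)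
  ultimately show "proj_meet n a c S" by (auto simp: proj_meet_def)
qed

lemma isect_perp:
  assumes "n + 1 \<notin> B"
  shows "x \<in> isect a c B \<longleftrightarrow> perp (cw n a c ` B) (emb x 1)"
proof -
  have "dotp (cw n a c i) (emb x 1) = dotp (a i) x - c i" if "i \<in> B" for i
  proof -
    have "i \<noteq> Suc n" using that assms by auto
    then show ?thesis by (simp add: dot_cw)
  qed
  then show ?thesis by (auto simp: isect_def hyp_def perp_def)
qed

lemma hyp_perp:
  assumes "j \<noteq> n + 1"
  shows "x \<in> hyp (a j) (c j) \<longleftrightarrow> dotp (cw n a c j) (emb x 1) = 0"
  using assms by (auto simp: hyp_def dot_cw)

lemma normalize_point:
  assumes "perp W y" "y $ None \<noteq> 0"
  shows "perp W (emb (xpart ((1 / y $ None) *s y)) 1)"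
proof -
  have "emb (xpart ((1 / y $ None) *s y)) 1 = (1 / y $ None) *s y"
    using emb_xpart[of "(1 / y $ None) *s y"] assms(2) by simp
  then show ?thesis using perp_scale[OF assms(1)] by simp
qed

lemma empty_char:
  assumes "n + 1 \<notin> B"
  shows "isect a c B = {} \<longleftrightarrow> cw n a c (n + 1) \<in> vec.span (cw n a c ` B)"
proof
  assume "cw n a c (n + 1) \<in> vec.span (cw n a c ` B)"
  show "isect a c B = {}"
  proof (rule ccontr)
    assume "isect a c B \<noteq> {}"
    then obtain x where "x \<in> isect a c B" by auto
    then have "perp (cw n a c ` B) (emb x 1)" using isect_perp[OF assms] by blast
    then have "perp (vec.span (cw n a c ` B)) (emb x 1)" by (rule perp_span)
    then have "dotp (cw n a c (n + 1)) (emb x 1) = 0"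
      using \<open>cw n a c (n + 1) \<in> vec.span (cw n a c ` B)\<close> by (auto simp: perp_def)
    then show False by (simp add: dot_cw_inf)
  qed
next
  assume "isect a c B = {}"
  show "cw n a c (n + 1) \<in> vec.span (cw n a c ` B)"
  proof (rule ccontr)
    assume "cw n a c (n + 1) \<notin> vec.span (cw n a c ` B)"
    then obtain y where y: "perp (vec.span (cw n a c ` B)) y" "dotp (cw n a c (n + 1)) y \<noteq> 0"
      using functional_exists by blast
    have "y $ None \<noteq> 0" using y(2) by (simp add: dot_cw_inf)
    then have "perp (vec.span (cw n a c ` B)) (emb (xpart ((1 / y $ None) *s y)) 1)"
      using normalize_point y(1) by blast
    then have "perp (cw n a c ` B) (emb (xpart ((1 / y $ None) *s y)) 1)"
      by (rule perp_base)
    then have "xpart ((1 / y $ None) *s y) \<in> isect a c B" using isect_perp[OF assms] by blast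
    then show False using \<open>isect a c B = {}\<close> by auto
  qed
qed

lemma incl_char:
  assumes "n + 1 \<notin> B" "j \<noteq> n + 1" "isect a c B \<noteq> {}"
  shows "isect a c B \<subseteq> hyp (a j) (c j) \<longleftrightarrow> cw n a c j \<in> vec.span (cw n a c ` B)"
proof
  assume "cw n a c j \<in> vec.span (cw n a c ` B)"
  show "isect a c B \<subseteq> hyp (a j) (c j)"
  proof
    fix x assume "x \<in> isect a c B"
    then have "perp (cw n a c ` B) (emb x 1)" using isect_perp[OF assms(1)] by blast
    then have "perp (vec.span (cw n a c ` B)) (emb x 1)" by (rule perp_span)
    then have "dotp (cw n a c j) (emb x 1) = 0"
      using \<open>cw n a c j \<in> vec.span (cw n a c ` B)\<close> by (simp add: perp_def)
    then show "x \<in> hyp (a j) (c j)" using hyp_perp[OF assms(2)] by blast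
  qed
next
  assume sub: "isect a c B \<subseteq> hyp (a j) (c j)"
  show "cw n a c j \<in> vec.span (cw n a c ` B)"
  proof (rule ccontr)
    assume "cw n a c j \<notin> vec.span (cw n a c ` B)"
    then obtain y where y: "perp (vec.span (cw n a c ` B)) y" "dotp (cw n a c j) y \<noteq> 0"
      using functional_exists by blast
    obtain x0 where x0: "x0 \<in> isect a c B" using assms(3) by auto
    let ?y0 = "emb x0 1"
    have "perp (cw n a c ` B) ?y0" using x0 isect_perp[OF assms(1)] by blast
    then have p0: "perp (vec.span (cw n a c ` B)) ?y0" by (rule perp_span)
    have "\<exists>z. perp (vec.span (cw n a c ` B)) z \<and> z $ None = 1 \<and> dotp (cw n a c j) z \<noteq> 0"
    proof (cases "dotp (cw n a c j) ?y0 \<noteq> 0")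
      case True then show ?thesis using p0 by (intro exI[of _ ?y0]) simp
    next
      case False
      show ?thesis
      proof (cases "y $ None = 0")
        case True
        then show ?thesis using False p0 y
          by (intro exI[of _ "?y0 + y"]) (auto simp: perp_add dotp_add2)
      next
        case ne: False
        have "((1 / y $ None) *s y) $ None = 1" using ne by simp
        moreover have "dotp (cw n a c j) ((1 / y $ None) *s y) \<noteq> 0" using y(2) ne by (simp add: dotp_scale2)
        ultimately show ?thesis using perp_scale[OF y(1)] by blast
      qed
    qed
    then obtain z where z: "perp (vec.span (cw n a c ` B)) z" "z $ None = 1" "dotp (cw n a c j) z \<noteq> 0" by blast
    have ez: "emb (xpart z) 1 = z" using emb_xpart[of z] z(2) by simp
    have "perp (cw n a c ` B) z" using z(1) by (rule perp_base)
    then have "xpart z \<in> isect a c B" using isect_perp[OF assms(1), of "xpart z"] ez by simp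
    moreover have "xpart z \<notin> hyp (a j) (c j)" using hyp_perp[where a=a and c=c and x="xpart z", OF assms(2)] ez z(3) by simp
    ultimately show False using sub by blast
  qed
qed


lemma ess_span:
  assumes "essential n a c"
  shows "vec.span (cw n a c ` {1..n+1}) = UNIV"
proof (rule ccontr)
  assume "vec.span (cw n a c ` {1..n+1}) \<noteq> UNIV"
  then have "proj_meet n a c {1..n+1}" by (simp add: proj_meet_iff)
  then obtain x t where xt: "(x, t) \<noteq> (0, 0)" "\<forall>i\<in>{1..n+1}. (x, t) \<in> coneH n a c i"
    by (auto simp: proj_meet_def)
  have "t = 0" using xt(2)[rule_format, of "n+1"] by (simp add: coneH_def)
  then have x0: "x \<noteq> 0" using xt(1) by simp
  obtain B p where B: "B \<subseteq> {1..n}" "isect a c B = {p}"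
    using assms by (auto simp: essential_def LA_def)
  have "p + x \<in> isect a c B"
  proof -
    have "dotp (a i) (p + x) = c i" if "i \<in> B" for i
    proof -
      have "i \<in> {1..n+1}" "i \<noteq> n + 1" using that B(1) by auto
      moreover have "(x, t) \<in> coneH n a c i" using xt(2) \<open>i \<in> {1..n+1}\<close> by blast
      ultimately have "dotp (a i) x = 0" using \<open>t = 0\<close> by (simp add: coneH_def)
      moreover have "dotp (a i) p = c i" using B(2) that by (auto simp: isect_def hyp_def)
      ultimately show ?thesis by (simp add: dotp_add2)
    qed
    then show ?thesis by (auto simp: isect_def hyp_def)
  qed
  then have "p + x = p" using B(2) by auto
  then show False using x0 by simp
qed

lemma Iset_eq_iff:
  fixes a a' :: "nat \<Rightarrow> 'a::field ^ 'n"
  shows "Iset n a c = Iset n a' c' \<longleftrightarrow>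
    (\<forall>T. T \<subseteq> {1..n+1} \<and> card T = CARD('n) + 1 \<longrightarrow> (proj_meet n a c T \<longleftrightarrow> proj_meet n a' c' T))"
proof
  assume H: "Iset n a c = Iset n a' c'"
  show "\<forall>T. T \<subseteq> {1..n+1} \<and> card T = CARD('n) + 1 \<longrightarrow> (proj_meet n a c T \<longleftrightarrow> proj_meet n a' c' T)"
  proof (intro allI impI)
    fix T :: "nat set" assume T: "T \<subseteq> {1..n+1} \<and> card T = CARD('n) + 1"
    then have "finite T" using finite_subset by blast
    then obtain l where l: "sorted_wrt (<) l" "set l = T" "length l = card T"
      using finite_set_strict_sorted[of T] by auto
    have "l \<in> Iset n a c \<longleftrightarrow> proj_meet n a c T" using l T by (auto simp: Iset_def)
    moreover have "l \<in> Iset n a' c' \<longleftrightarrow> proj_meet n a' c' T" using l T by (auto simp: Iset_def)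
    ultimately show "proj_meet n a c T \<longleftrightarrow> proj_meet n a' c' T" using H by simp
  qed
next
  assume H: "\<forall>T. T \<subseteq> {1..n+1} \<and> card T = CARD('n) + 1 \<longrightarrow> (proj_meet n a c T \<longleftrightarrow> proj_meet n a' c' T)"
  have "l \<in> Iset n a c \<longleftrightarrow> l \<in> Iset n a' c'" for l
  proof -
    have "sorted_wrt (<) l \<Longrightarrow> card (set l) = length l"
      by (simp add: distinct_card strict_sorted_iff)
    then show ?thesis using H[rule_format, of "set l"] by (auto simp: Iset_def)
  qed
  then show "Iset n a c = Iset n a' c'" by (intro set_eqI)
qed

lemma lat_char:
  assumes "B \<subseteq> {1..n}" "C \<subseteq> {1..n}"
  shows "isect a c B \<subseteq> isect a c C \<longleftrightarrow>
    (cw n a c (n+1) \<in> vec.span (cw n a c ` B) \<or> (\<forall>j\<in>C. cw n a c j \<in> vec.span (cw n a c ` B)))"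
proof -
  have nB: "n + 1 \<notin> B" using assms by auto
  show ?thesis
  proof (cases "isect a c B = {}")
    case True then show ?thesis using empty_char[OF nB, of a c] by simp
  next
    case False
    have "isect a c B \<subseteq> isect a c C \<longleftrightarrow> (\<forall>j\<in>C. isect a c B \<subseteq> hyp (a j) (c j))"
      by (auto simp: isect_def)
    also have "\<dots> \<longleftrightarrow> (\<forall>j\<in>C. cw n a c j \<in> vec.span (cw n a c ` B))"
    proof -
      have "j \<in> C \<Longrightarrow> isect a c B \<subseteq> hyp (a j) (c j) \<longleftrightarrow> cw n a c j \<in> vec.span (cw n a c ` B)" for j
      proof -
        assume "j \<in> C"
        then have "j \<noteq> n + 1" using assms(2) by auto
        then show ?thesis using incl_char[OF nB _ False, of j] by blast
      qed
      then show ?thesis by blast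
    qed
    finally show ?thesis using empty_char[OF nB, of a c] False by simp
  qed
qed

lemma ci_char:
  "(indp w I \<and> w p \<notin> vec.span (w ` I)) \<longleftrightarrow>
   (w p \<notin> vec.span (w ` I) \<and> (\<forall>i\<in>I. \<not> (w p \<in> vec.span (w ` (I - {i})) \<or> w i \<in> vec.span (w ` (I - {i})))))"
proof -
  have "w p \<notin> vec.span (w ` I) \<Longrightarrow> w p \<notin> vec.span (w ` (I - {i}))" for i
    using vec.span_mono[of "w ` (I - {i})" "w ` I"] by blast
  then show ?thesis unfolding indp_def by blast
qed

lemma span_transfer:
  assumes ind: "\<forall>J. J \<subseteq> E \<longrightarrow> (indp w J \<longleftrightarrow> indp w' J)" and B: "B \<subseteq> E" and j: "j \<in> E"
  shows "w j \<in> vec.span (w ` B) \<longleftrightarrow> w' j \<in> vec.span (w' ` B)"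
proof -
  have e1: "(I \<subseteq> B \<and> indp w I \<and> (\<forall>b\<in>B - I. \<not> indp w (insert b I))) \<longleftrightarrow>
            (I \<subseteq> B \<and> indp w' I \<and> (\<forall>b\<in>B - I. \<not> indp w' (insert b I)))" for I
  proof -
    have "I \<subseteq> B \<Longrightarrow> indp w I \<longleftrightarrow> indp w' I" using ind B by blast
    moreover have "I \<subseteq> B \<Longrightarrow> b \<in> B \<Longrightarrow> indp w (insert b I) \<longleftrightarrow> indp w' (insert b I)" for b
      using ind B by (metis insert_subset subset_trans)
    ultimately show ?thesis by blast
  qed
  have e2: "I \<subseteq> B \<Longrightarrow> indp w (insert j I) \<longleftrightarrow> indp w' (insert j I)" for I
    using ind B j by (metis insert_subset subset_trans)
  show ?thesis unfolding span_iff_indp[of w j B] span_iff_indp[of w' j B]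
  proof (intro iffI allI impI)
    fix I
    assume H: "\<forall>I. I \<subseteq> B \<and> indp w I \<and> (\<forall>b\<in>B - I. \<not> indp w (insert b I)) \<longrightarrow> j \<in> I \<or> \<not> indp w (insert j I)"
      and P: "I \<subseteq> B \<and> indp w' I \<and> (\<forall>b\<in>B - I. \<not> indp w' (insert b I))"
    from P e1[of I] have "I \<subseteq> B \<and> indp w I \<and> (\<forall>b\<in>B - I. \<not> indp w (insert b I))" by simp
    with H have "j \<in> I \<or> \<not> indp w (insert j I)" by blast
    then show "j \<in> I \<or> \<not> indp w' (insert j I)" using e2[of I] P by simp
  next
    fix I
    assume H: "\<forall>I. I \<subseteq> B \<and> indp w' I \<and> (\<forall>b\<in>B - I. \<not> indp w' (insert b I)) \<longrightarrow> j \<in> I \<or> \<not> indp w' (insert j I)"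
      and P: "I \<subseteq> B \<and> indp w I \<and> (\<forall>b\<in>B - I. \<not> indp w (insert b I))"
    from P e1[of I] have "I \<subseteq> B \<and> indp w' I \<and> (\<forall>b\<in>B - I. \<not> indp w' (insert b I))" by simp
    with H have "j \<in> I \<or> \<not> indp w' (insert j I)" by blast
    then show "j \<in> I \<or> \<not> indp w (insert j I)" using e2[of I] P by simp
  qed
qed


lemma empty_char':
  "B \<subseteq> {1..n} \<Longrightarrow> isect a c B = {} \<longleftrightarrow> cw n a c (n + 1) \<in> vec.span (cw n a c ` B)"
  by (rule empty_char) auto

theorem theorem3p4:
  fixes n :: nat
    and a a' :: "nat \<Rightarrow> 'a::field ^ 'n"
    and c c' :: "nat \<Rightarrow> 'a"
  assumes "arrangement n a c" and "essential n a c"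
    and "arrangement n a' c'" and "essential n a' c'"
  shows "Iset n a c = Iset n a' c' \<longleftrightarrow> same_lattice n a c a' c'"
proof -
  define E :: "nat set" where "E = {1..n+1}"
  define w where "w = cw n a c"
  define w' where "w' = cw n a' c'"
  define p where "p = n + 1"
  have fE: "finite E" by (simp add: E_def)
  have spE: "vec.span (w ` E) = UNIV" using ess_span[OF assms(2)] by (simp add: E_def w_def)
  have spE': "vec.span (w' ` E) = UNIV" using ess_span[OF assms(4)] by (simp add: E_def w'_def)
  have cU: "CARD('n option) = CARD('n) + 1" by (rule card_option_UNIV)
  have I_iff: "Iset n a c = Iset n a' c' \<longleftrightarrow>
      (\<forall>T. T \<subseteq> E \<and> card T = CARD('n option) \<longrightarrow> (vec.span (w ` T) = UNIV \<longleftrightarrow> vec.span (w' ` T) = UNIV))"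
  proof -
    have eq: "(proj_meet n a c T \<longleftrightarrow> proj_meet n a' c' T) \<longleftrightarrow>
              (vec.span (w ` T) = UNIV \<longleftrightarrow> vec.span (w' ` T) = UNIV)" for T
      by (simp add: proj_meet_iff w_def w'_def)
    show ?thesis unfolding Iset_eq_iff cU E_def eq ..
  qed
  have LB: "((isect a c B \<subseteq> isect a c C \<longleftrightarrow> isect a' c' B \<subseteq> isect a' c' C) \<and>
             (isect a c B = {} \<longleftrightarrow> isect a' c' B = {})) \<longleftrightarrow>
            ((w p \<in> vec.span (w ` B) \<or> (\<forall>j\<in>C. w j \<in> vec.span (w ` B))) \<longleftrightarrow>
             (w' p \<in> vec.span (w' ` B) \<or> (\<forall>j\<in>C. w' j \<in> vec.span (w' ` B)))) \<and>
            (w p \<in> vec.span (w ` B) \<longleftrightarrow> w' p \<in> vec.span (w' ` B))"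
    if "B \<subseteq> {1..n}" "C \<subseteq> {1..n}" for B C
    unfolding lat_char[OF that, of a c] lat_char[OF that, of a' c'] empty_char'[OF that(1), of a c]
      empty_char'[OF that(1), of a' c'] w_def w'_def p_def ..
  have L_iff: "same_lattice n a c a' c' \<longleftrightarrow>
      (\<forall>B C. B \<subseteq> {1..n} \<and> C \<subseteq> {1..n} \<longrightarrow>
         ((w p \<in> vec.span (w ` B) \<or> (\<forall>j\<in>C. w j \<in> vec.span (w ` B))) \<longleftrightarrow>
             (w' p \<in> vec.span (w' ` B) \<or> (\<forall>j\<in>C. w' j \<in> vec.span (w' ` B)))) \<and>
            (w p \<in> vec.span (w ` B) \<longleftrightarrow> w' p \<in> vec.span (w' ` B)))"
  proof (unfold same_lattice_def, intro iffI allI impI)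
    fix B C
    assume H: "\<forall>B\<subseteq>{1..n}. \<forall>C\<subseteq>{1..n}.
        (isect a c B \<subseteq> isect a c C \<longleftrightarrow> isect a' c' B \<subseteq> isect a' c' C) \<and>
        (isect a c B = {} \<longleftrightarrow> isect a' c' B = {})"
      and BC: "B \<subseteq> {1..n} \<and> C \<subseteq> {1..n}"
    then have "(isect a c B \<subseteq> isect a c C \<longleftrightarrow> isect a' c' B \<subseteq> isect a' c' C) \<and>
        (isect a c B = {} \<longleftrightarrow> isect a' c' B = {})" by blast
    then show "((w p \<in> vec.span (w ` B) \<or> (\<forall>j\<in>C. w j \<in> vec.span (w ` B))) \<longleftrightarrow>
             (w' p \<in> vec.span (w' ` B) \<or> (\<forall>j\<in>C. w' j \<in> vec.span (w' ` B)))) \<and>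
            (w p \<in> vec.span (w ` B) \<longleftrightarrow> w' p \<in> vec.span (w' ` B))"
      using LB[of B C] BC by blast
  next
    fix B C
    assume H: "\<forall>B C. B \<subseteq> {1..n} \<and> C \<subseteq> {1..n} \<longrightarrow>
         ((w p \<in> vec.span (w ` B) \<or> (\<forall>j\<in>C. w j \<in> vec.span (w ` B))) \<longleftrightarrow>
             (w' p \<in> vec.span (w' ` B) \<or> (\<forall>j\<in>C. w' j \<in> vec.span (w' ` B)))) \<and>
            (w p \<in> vec.span (w ` B) \<longleftrightarrow> w' p \<in> vec.span (w' ` B))"
      and B: "B \<subseteq> {1..n}" and C: "C \<subseteq> {1..n}"
    then have "((w p \<in> vec.span (w ` B) \<or> (\<forall>j\<in>C. w j \<in> vec.span (w ` B))) \<longleftrightarrow>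
             (w' p \<in> vec.span (w' ` B) \<or> (\<forall>j\<in>C. w' j \<in> vec.span (w' ` B)))) \<and>
            (w p \<in> vec.span (w ` B) \<longleftrightarrow> w' p \<in> vec.span (w' ` B))" by blast
    then show "(isect a c B \<subseteq> isect a c C \<longleftrightarrow> isect a' c' B \<subseteq> isect a' c' C) \<and>
        (isect a c B = {} \<longleftrightarrow> isect a' c' B = {})"
      using LB[OF B C] by blast
  qed
  show ?thesis
  proof
    assume "Iset n a c = Iset n a' c'"
    then have SB: "\<forall>T. T \<subseteq> E \<and> card T = CARD('n option) \<longrightarrow> (vec.span (w ` T) = UNIV \<longleftrightarrow> vec.span (w' ` T) = UNIV)"
      using I_iff by blast
    have ind: "\<forall>J. J \<subseteq> E \<longrightarrow> (indp w J \<longleftrightarrow> indp w' J)"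
    proof (intro allI impI)
      fix J assume J: "J \<subseteq> E"
      show "indp w J \<longleftrightarrow> indp w' J"
        unfolding indp_iff_basis[OF fE spE J] indp_iff_basis[OF fE spE' J] using SB by blast
    qed
    have tr: "w j \<in> vec.span (w ` B) \<longleftrightarrow> w' j \<in> vec.span (w' ` B)" if "B \<subseteq> E" "j \<in> E" for B j
      by (rule span_transfer[OF ind that])
    have "\<forall>B C. B \<subseteq> {1..n} \<and> C \<subseteq> {1..n} \<longrightarrow>
         ((w p \<in> vec.span (w ` B) \<or> (\<forall>j\<in>C. w j \<in> vec.span (w ` B))) \<longleftrightarrow>
             (w' p \<in> vec.span (w' ` B) \<or> (\<forall>j\<in>C. w' j \<in> vec.span (w' ` B)))) \<and>
            (w p \<in> vec.span (w ` B) \<longleftrightarrow> w' p \<in> vec.span (w' ` B))"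
    proof (intro allI impI)
      fix B C assume BC: "B \<subseteq> {1..n} \<and> C \<subseteq> {1..n}"
      have BE: "B \<subseteq> E" using BC by (auto simp: E_def)
      have pE: "p \<in> E" by (simp add: E_def p_def)
      have CE: "\<forall>j\<in>C. j \<in> E" using BC by (auto simp: E_def)
      have t1: "w p \<in> vec.span (w ` B) \<longleftrightarrow> w' p \<in> vec.span (w' ` B)" using tr[OF BE pE] .
      have t2: "(\<forall>j\<in>C. w j \<in> vec.span (w ` B)) \<longleftrightarrow> (\<forall>j\<in>C. w' j \<in> vec.span (w' ` B))"
        using tr[OF BE] CE by blast
      show "((w p \<in> vec.span (w ` B) \<or> (\<forall>j\<in>C. w j \<in> vec.span (w ` B))) \<longleftrightarrow>
             (w' p \<in> vec.span (w' ` B) \<or> (\<forall>j\<in>C. w' j \<in> vec.span (w' ` B)))) \<and>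
            (w p \<in> vec.span (w ` B) \<longleftrightarrow> w' p \<in> vec.span (w' ` B))"
        using t1 t2 by blast
    qed
    then show "same_lattice n a c a' c'" using L_iff by blast
  next
    assume "same_lattice n a c a' c'"
    then have LF: "\<forall>B C. B \<subseteq> {1..n} \<and> C \<subseteq> {1..n} \<longrightarrow>
         ((w p \<in> vec.span (w ` B) \<or> (\<forall>j\<in>C. w j \<in> vec.span (w ` B))) \<longleftrightarrow>
             (w' p \<in> vec.span (w' ` B) \<or> (\<forall>j\<in>C. w' j \<in> vec.span (w' ` B)))) \<and>
            (w p \<in> vec.span (w ` B) \<longleftrightarrow> w' p \<in> vec.span (w' ` B))"
      using L_iff by blast
    have e: "w p \<in> vec.span (w ` B) \<longleftrightarrow> w' p \<in> vec.span (w' ` B)" if "B \<subseteq> {1..n}" for B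
      using LF that by blast
    have e2: "(w p \<in> vec.span (w ` (I - {i})) \<or> w i \<in> vec.span (w ` (I - {i}))) \<longleftrightarrow>
              (w' p \<in> vec.span (w' ` (I - {i})) \<or> w' i \<in> vec.span (w' ` (I - {i})))"
      if "I \<subseteq> {1..n}" "i \<in> I" for I i
    proof -
      have "I - {i} \<subseteq> {1..n} \<and> {i} \<subseteq> {1..n}" using that by auto
      then show ?thesis using LF by (metis (no_types, lifting) singletonD singletonI)
    qed
    have cie: "(indp w I \<and> w p \<notin> vec.span (w ` I)) \<longleftrightarrow> (indp w' I \<and> w' p \<notin> vec.span (w' ` I))"
      if "I \<subseteq> {1..n}" for I
      unfolding ci_char[of w I p] ci_char[of w' I p] using e[OF that] e2[OF that] by blast
    have "vec.span (w ` T) = UNIV \<longleftrightarrow> vec.span (w' ` T) = UNIV"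
      if T: "T \<subseteq> E" "card T = CARD('n option)" for T
    proof -
      have fT: "finite T" using T fE finite_subset by blast
      have wp: "w p \<noteq> 0" "w' p \<noteq> 0" using cw_inf_ne0 by (auto simp: w_def w'_def p_def)
      have Tp: "T - {p} \<subseteq> {1..n}" using T by (auto simp: E_def p_def)
      have ex: "(\<exists>I. I \<subseteq> T - {p} \<and> card I = CARD('n option) - 1 \<and> indp w I \<and> w p \<notin> vec.span (w ` I)) \<longleftrightarrow>
                (\<exists>I. I \<subseteq> T - {p} \<and> card I = CARD('n option) - 1 \<and> indp w' I \<and> w' p \<notin> vec.span (w' ` I))"
      proof -
        have "I \<subseteq> T - {p} \<Longrightarrow> (indp w I \<and> w p \<notin> vec.span (w ` I)) \<longleftrightarrow> (indp w' I \<and> w' p \<notin> vec.span (w' ` I))" for I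
          using cie Tp by blast
        then show ?thesis by blast
      qed
      show ?thesis
        unfolding span_char[where w=w and p=p, OF fT T(2) wp(1)] span_char[where w=w' and p=p, OF fT T(2) wp(2)]
        using ex e[OF Tp] by blast
    qed
    then show "Iset n a c = Iset n a' c'" using I_iff by blast
  qed
qed

end
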